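(* Let $R\in\{\mathrm C,\mathrm S\}$, let $p,q\in[0,1]$ be rational numbers with $p<q$, let $I$ be a closed interval with $I\subseteq(0,1)$, and let $\varpi\in\Omega$ be wCH-random for $I$. Then a path $\omega\in\Omega$ is $R$-random for $\varphi^\varpi_{p,q}$ if and only if it is $R$-random for $[p,q]$.
   Context: Notation: $\mathbb N=\{1,2,\dots\}$, $\mathbb N_0=\mathbb N\cup\{0\}$. $\Omega=\{0,1\}^{\mathbb N}$ is the set of paths $\omega=(\omega_1,\omega_2,\dots)$; $\omega_{1:n}=(\omega_1,\dots,\omega_n)$, $\omega_{1:0}=\square$. $\mathbb S=\bigcup_{n\in\mathbb N_0}\{0,1\}^n$ is the set of situations, $|s|$ the length, $sx$ concatenation. For $r\in[0,1]$, $f:\{0,1\}\to\mathbb R$: $E_r(f)=rf(1)+(1-r)f(0)$; for a closed interval $I\subseteq[0,1]$, $\overline E_I(f)=\max_{r\in I}E_r(f)$. A forecasting system is a map $\varphi$ from $\mathbb S$ to closed subintervals of $[0,1]$, $\underline\varphi(s)=\min\varphi(s)$, $\overline\varphi(s)=\max\varphi(s)$; being random for an interval $I$ means being random for the constant forecasting system with value $I$. A real process is $F:\mathbb S\to\mathbb R$; $\Delta F(s)$ is $x\mapsto F(sx)-F(s)$. $M$ is a supermartingale for $\varphi$ if $\overline E_{\varphi(s)}(\Delta M(s))\le0$ for all $s$. A test supermartingale for $\varphi$ is a non-negative supermartingale $T$ for $\varphi$ with $T(\square)=1$. Computability: maps from countable effectively encoded domains to $\mathbb N_0$, $\mathbb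 Q$ or $\{0,1\}$ are recursive if Turing-computable; a real map $r$ is computable if $|r(d)-q(d,n)|<2^{-n}$ for a recursive rational $q$. $\overline{\mathbb T}_{\mathrm C}(\varphi)=\overline{\mathbb T}_{\mathrm S}(\varphi)$ is the set of positive, rational-valued, recursive test supermartingales for $\varphi$. $\omega$ is C-random for $\varphi$ if no $T\in\overline{\mathbb T}_{\mathrm C}(\varphi)$ has $\limsup_nT(\omega_{1:n})=\infty$. A real growth function is a computable, non-decreasing, unbounded $\tau:\mathbb N_0\to[0,\infty)$; $\omega$ is S-random for $\varphi$ if there are no $T\in\overline{\mathbb T}_{\mathrm S}(\varphi)$ and real growth function $\tau$ with $\limsup_n[T(\omega_{1:n})-\tau(n)]\ge0$. A selection process is $S:\mathbb S\to\{0,1\}$, temporal if $S(s)$ depends only on $|s|$ (written $S(n)$). A path $\varpi$ is wCH-random for $\varphi$ if for every recursive temporal selection process $S$ with $\lim_n\sum_{k=0}^{n-1}S(k)=\infty$: $\liminf_n\frac{\sum_{k=0}^{n-1}S(k)[\varpi_{k+1}-\underline\varphi(\varpi_{1:k})]}{\sum_{k=0}^{n-1}S(k)}\ge0$ and $\limsup_n\frac{\sum_{k=0}^{n-1}S(k)[\varpi_{k+1}-\overline\varphi(\varpi_{1:k})]}{\sum_{k=0}^{n-1}S(k)}\le0$. For $\varpi\in\Omega$, $\varphi^\varpi_{p,q}$ is the precise forecasting system with $\varphi^\varpi_{p,q}(s)=p$ if $\varpi_{|s|+1}=0$ and $\varphi^\varpi_{p,q}(s)=q$ if $\varpi_{|s|+1}=1$.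 *)

theory Defs
  imports Complex_Main "HOL-Library.Nat_Bijection" "HOL-Library.Extended_Real"
    "HOL-Library.Liminf_Limsup"
begin

datatype recf = Zero | Succ | Proj nat | Comp recf "recf list" | Prim recf recf | Mn recf

inductive eval :: "recf \<Rightarrow> nat list \<Rightarrow> nat \<Rightarrow> bool" where
  ev_zero: "eval Zero xs 0"
| ev_succ: "eval Succ (x # xs) (Suc x)"
| ev_proj: "i < length xs \<Longrightarrow> eval (Proj i) xs (xs ! i)"
| ev_comp: "length ys = length gs \<Longrightarrow> (\<forall>i < length gs. eval (gs ! i) xs (ys ! i))
            \<Longrightarrow> eval f ys z \<Longrightarrow> eval (Comp f gs) xs z"
| ev_prim0: "eval f xs y \<Longrightarrow> eval (Prim f g) (0 # xs) y"
| ev_primS: "eval (Prim f g) (n # xs) y \<Longrightarrow> eval g (y # n # xs) z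
            \<Longrightarrow> eval (Prim f g) (Suc n # xs) z"
| ev_mn: "eval f (y # xs) 0 \<Longrightarrow> (\<forall>i < y. \<exists>k. eval f (i # xs) (Suc k))
            \<Longrightarrow> eval (Mn f) xs y"

definition recursive_nat :: "(nat \<Rightarrow> nat) \<Rightarrow> bool" where
  "recursive_nat f \<longleftrightarrow> (\<exists>c. \<forall>n. eval c [n] (f n))"

text \<open>Situations are finite binary sequences (True = 1, False = 0);
encoded bijectively as natural numbers.\<close>
type_synonym sit = "bool list"

fun enc_sit :: "sit \<Rightarrow> nat" where
  "enc_sit [] = 0"
| "enc_sit (b # s) = 2 * enc_sit s + (if b then 2 else 1)"

definition dec_rat :: "nat \<Rightarrow> real" where
  "dec_rat n = (case prod_decode n of (a, b) \<Rightarrow> of_int (int_decode a) / of_nat (Suc b))"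

definition recursive_rat_sit :: "(sit \<Rightarrow> real) \<Rightarrow> bool" where
  "recursive_rat_sit F \<longleftrightarrow> (\<exists>g. recursive_nat g \<and> (\<forall>s. F s = dec_rat (g (enc_sit s))))"

definition computable_real_nat :: "(nat \<Rightarrow> real) \<Rightarrow> bool" where
  "computable_real_nat r \<longleftrightarrow> (\<exists>g. recursive_nat g \<and>
      (\<forall>d m. \<bar>r d - dec_rat (g (prod_encode (d, m)))\<bar> < 1 / 2 ^ m))"

text \<open>A path omega :: nat \<Rightarrow> bool; omega k is the (k+1)-th outcome omega_{k+1}.\<close>
definition prefix :: "(nat \<Rightarrow> bool) \<Rightarrow> nat \<Rightarrow> sit" where
  "prefix \<omega> n = map \<omega> [0..<n]"

text \<open>A closed interval [l,u] is represented as a pair (l,u); a forecasting system maps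
situations to closed subintervals of [0,1].\<close>
type_synonym fsys = "sit \<Rightarrow> real \<times> real"

definition is_interval :: "real \<times> real \<Rightarrow> bool" where
  "is_interval I \<longleftrightarrow> 0 \<le> fst I \<and> fst I \<le> snd I \<and> snd I \<le> 1"

definition forecasting_system :: "fsys \<Rightarrow> bool" where
  "forecasting_system \<phi> \<longleftrightarrow> (\<forall>s. is_interval (\<phi> s))"

definition Exp :: "real \<Rightarrow> (bool \<Rightarrow> real) \<Rightarrow> real" where
  "Exp r f = r * f True + (1 - r) * f False"

definition UExp :: "real \<times> real \<Rightarrow> (bool \<Rightarrow> real) \<Rightarrow> real" where
  "UExp I f = (SUP r\<in>{fst I..snd I}. Exp r f)"

definition supermartingale :: "fsys \<Rightarrow> (sit \<Rightarrow> real) \<Rightarrow> bool" where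
  "supermartingale \<phi> M \<longleftrightarrow> (\<forall>s. UExp (\<phi> s) (\<lambda>x. M (s @ [x]) - M s) \<le> 0)"

definition test_supermartingale :: "fsys \<Rightarrow> (sit \<Rightarrow> real) \<Rightarrow> bool" where
  "test_supermartingale \<phi> T \<longleftrightarrow> supermartingale \<phi> T \<and> (\<forall>s. T s \<ge> 0) \<and> T [] = 1"

definition rec_tests :: "fsys \<Rightarrow> (sit \<Rightarrow> real) set" where
  "rec_tests \<phi> = {T. test_supermartingale \<phi> T \<and> (\<forall>s. T s > 0) \<and> (\<forall>s. T s \<in> \<rat>)
                     \<and> recursive_rat_sit T}"

definition C_random :: "fsys \<Rightarrow> (nat \<Rightarrow> bool) \<Rightarrow> bool" where
  "C_random \<phi> \<omega> \<longleftrightarrow> \<not> (\<exists>T\<in>rec_tests \<phi>. limsup (\<lambda>n. ereal (T (prefix \<omega> n))) = \<infinity>)"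

definition real_growth_function :: "(nat \<Rightarrow> real) \<Rightarrow> bool" where
  "real_growth_function \<tau> \<longleftrightarrow> computable_real_nat \<tau> \<and> mono \<tau> \<and> (\<forall>n. \<tau> n \<ge> 0)
      \<and> (\<forall>B. \<exists>n. \<tau> n > B)"

definition S_random :: "fsys \<Rightarrow> (nat \<Rightarrow> bool) \<Rightarrow> bool" where
  "S_random \<phi> \<omega> \<longleftrightarrow> \<not> (\<exists>T\<in>rec_tests \<phi>. \<exists>\<tau>. real_growth_function \<tau> \<and>
      limsup (\<lambda>n. ereal (T (prefix \<omega> n) - \<tau> n)) \<ge> 0)"

text \<open>A temporal selection process S :: nat \<Rightarrow> bool (S n = True means S(n) = 1);
it is recursive if its 0/1 indicator is a recursive map.\<close>
definition recursive_temporal_sel :: "(nat \<Rightarrow> bool) \<Rightarrow> bool" where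
  "recursive_temporal_sel S \<longleftrightarrow> recursive_nat (\<lambda>n. if S n then 1 else 0)"

definition wCH_random :: "fsys \<Rightarrow> (nat \<Rightarrow> bool) \<Rightarrow> bool" where
  "wCH_random \<phi> w \<longleftrightarrow> (\<forall>S. recursive_temporal_sel S \<and>
      filterlim (\<lambda>n. \<Sum>k<n. of_bool (S k) :: real) at_top sequentially \<longrightarrow>
      liminf (\<lambda>n. ereal ((\<Sum>k<n. of_bool (S k) * (of_bool (w k) - fst (\<phi> (prefix w k))))
                          / (\<Sum>k<n. of_bool (S k)))) \<ge> 0 \<and>
      limsup (\<lambda>n. ereal ((\<Sum>k<n. of_bool (S k) * (of_bool (w k) - snd (\<phi> (prefix w k))))
                          / (\<Sum>k<n. of_bool (S k)))) \<le> 0)"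

definition const_fs :: "real \<times> real \<Rightarrow> fsys" where
  "const_fs I = (\<lambda>_. I)"

definition phi_sw :: "(nat \<Rightarrow> bool) \<Rightarrow> real \<Rightarrow> real \<Rightarrow> fsys" where
  "phi_sw w p q = (\<lambda>s. if w (length s) then (q, q) else (p, p))"

end

theory Submission
  imports Defs
begin

definition rf :: "nat \<Rightarrow> (nat list \<Rightarrow> nat) \<Rightarrow> bool" where
  "rf n f \<longleftrightarrow> (\<exists>c. \<forall>xs. length xs = n \<longrightarrow> eval c xs (f xs))"

lemma rf_cong: "rf n f \<Longrightarrow> (\<And>xs. length xs = n \<Longrightarrow> f xs = g xs) \<Longrightarrow> rf n g"
  unfolding rf_def by metis

lemma rf_zero: "rf n (\<lambda>xs. 0)"
  unfolding rf_def by (auto intro: eval.intros)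

lemma rf_proj: "i < n \<Longrightarrow> rf n (\<lambda>xs. xs ! i)"
  unfolding rf_def by (metis ev_proj)

lemma list_choice:
  "(\<forall>x\<in>set xs. \<exists>y. P x y) \<Longrightarrow> \<exists>ys. length ys = length xs \<and> (\<forall>i<length xs. P (xs!i) (ys!i))"
proof (induction xs)
  case Nil then show ?case by auto
next
  case (Cons a xs)
  then obtain ys where ys: "length ys = length xs" "\<forall>i<length xs. P (xs!i) (ys!i)" by auto
  from Cons.prems obtain y where "P a y" by auto
  then show ?case using ys
    by (intro exI[of _ "y # ys"]) (auto simp: nth_Cons split: nat.splits)
qed

lemma rf_comp:
  assumes "rf m f" "length gs = m" "\<forall>g\<in>set gs. rf n g"
  shows "rf n (\<lambda>xs. f (map (\<lambda>g. g xs) gs))"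
proof -
  from assms(1) obtain cf where cf: "\<forall>xs. length xs = m \<longrightarrow> eval cf xs (f xs)"
    unfolding rf_def by auto
  from assms(3) have "\<forall>g\<in>set gs. \<exists>c. \<forall>xs. length xs = n \<longrightarrow> eval c xs (g xs)"
    unfolding rf_def by auto
  from list_choice[OF this] obtain cs where cs: "length cs = length gs"
    "\<forall>i<length gs. \<forall>xs. length xs = n \<longrightarrow> eval (cs!i) xs ((gs!i) xs)" by auto
  show ?thesis unfolding rf_def
  proof (intro exI[of _ "Comp cf cs"] allI impI)
    fix xs :: "nat list" assume "length xs = n"
    then show "eval (Comp cf cs) xs (f (map (\<lambda>g. g xs) gs))"
      using cs cf assms(2) by (intro ev_comp[where ys="map (\<lambda>g. g xs) gs"]) auto
  qed
qed

lemma rf_comp1: "rf 1 h \<Longrightarrow> rf n f \<Longrightarrow> rf n (\<lambda>xs. h [f xs])"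
  using rf_comp[of 1 h "[f]" n] by auto

lemma rf_comp2: "rf 2 h \<Longrightarrow> rf n f \<Longrightarrow> rf n g \<Longrightarrow> rf n (\<lambda>xs. h [f xs, g xs])"
  using rf_comp[of 2 h "[f, g]" n] by auto

lemma rf_succ: "rf n f \<Longrightarrow> rf n (\<lambda>xs. Suc (f xs))"
proof -
  have "rf 1 (\<lambda>xs. Suc (hd xs))" unfolding rf_def
    by (rule exI[of _ Succ]) (auto simp: length_Suc_conv intro: ev_succ)
  then show "rf n f \<Longrightarrow> rf n (\<lambda>xs. Suc (f xs))" using rf_comp1 by fastforce
qed

lemma rf_prim:
  assumes "rf n f" "rf (Suc (Suc n)) g"
  shows "rf (Suc n) (\<lambda>ys. rec_nat (f (tl ys)) (\<lambda>k r. g (r # k # tl ys)) (hd ys))"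
proof -
  from assms obtain cf cg where cf: "\<forall>xs. length xs = n \<longrightarrow> eval cf xs (f xs)"
    and cg: "\<forall>xs. length xs = Suc (Suc n) \<longrightarrow> eval cg xs (g xs)"
    unfolding rf_def by auto
  have "eval (Prim cf cg) (k # xs) (rec_nat (f xs) (\<lambda>k r. g (r # k # xs)) k)"
    if "length xs = n" for k xs
    using that
  proof (induction k)
    case 0 then show ?case by (auto intro: ev_prim0 cf[rule_format])
  next
    case (Suc k) then show ?case by (auto intro!: ev_primS[OF Suc.IH] cg[rule_format])
  qed
  then show ?thesis unfolding rf_def
    by (intro exI[of _ "Prim cf cg"]) (auto simp: length_Suc_conv)
qed

lemma rf_const: "rf n (\<lambda>xs. c)"
  by (induction c) (auto intro: rf_zero rf_succ)

lemma rf_reindex: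
  assumes "rf m f" "\<forall>i<m. idx i < n"
  shows "rf n (\<lambda>xs. f (map (\<lambda>i. xs ! idx i) [0..<m]))"
proof -
  have "rf n (\<lambda>xs. f (map (\<lambda>g. g xs) (map (\<lambda>i xs. xs ! idx i) [0..<m])))"
    using assms by (intro rf_comp) (auto intro: rf_proj)
  then show ?thesis by (simp add: comp_def)
qed

lemma rf_add2: "rf 2 (\<lambda>xs. xs!0 + xs!1)"
proof -
  have "rf 2 (\<lambda>ys. rec_nat (tl ys ! 0) (\<lambda>k r. Suc r) (hd ys))"
    using rf_prim[OF rf_proj rf_succ[OF rf_proj], of 0 1 0] by (simp add: numeral_2_eq_2)
  then show ?thesis
  proof (rule rf_cong)
    fix xs :: "nat list" assume "length xs = 2"
    then obtain a b where "xs = [a, b]" by (auto simp: numeral_2_eq_2 length_Suc_conv)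
    then show "rec_nat (tl xs ! 0) (\<lambda>k r. Suc r) (hd xs) = xs!0 + xs!1"
      by (induction a arbitrary: xs) auto
  qed
qed

lemma rf_add: "rf n f \<Longrightarrow> rf n g \<Longrightarrow> rf n (\<lambda>xs. f xs + g xs)"
  using rf_comp2[OF rf_add2] by simp

lemma rf_mult2: "rf 2 (\<lambda>xs. xs!0 * xs!1)"
proof -
  have "rf 2 (\<lambda>ys. rec_nat 0 (\<lambda>k r. r + tl ys ! 0) (hd ys))"
  proof -
    have a: "rf 1 (\<lambda>xs. 0)" by (rule rf_const)
    have b: "rf 3 (\<lambda>xs. xs!0 + xs!2)" by (intro rf_add rf_proj) auto
    show ?thesis using rf_prim[OF a, of "\<lambda>xs. xs!0 + xs!2"] b by (simp add: numeral_2_eq_2 numeral_3_eq_3)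
  qed
  then show ?thesis
  proof (rule rf_cong)
    fix xs :: "nat list" assume "length xs = 2"
    then obtain a b where "xs = [a, b]" by (auto simp: numeral_2_eq_2 length_Suc_conv)
    then show "rec_nat 0 (\<lambda>k r. r + tl xs ! 0) (hd xs) = xs!0 * xs!1"
      by (induction a arbitrary: xs) auto
  qed
qed

lemma rf_mult: "rf n f \<Longrightarrow> rf n g \<Longrightarrow> rf n (\<lambda>xs. f xs * g xs)"
  using rf_comp2[OF rf_mult2] by simp

lemma rf_pred1: "rf 1 (\<lambda>xs. xs!0 - 1)"
proof -
  have "rf 1 (\<lambda>ys. rec_nat 0 (\<lambda>k r. k) (hd ys))"
  proof -
    have a: "rf 0 (\<lambda>xs. 0)" by (rule rf_const)
    have b: "rf 2 (\<lambda>xs. xs!1)" by (intro rf_proj) auto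
    show ?thesis using rf_prim[OF a, of "\<lambda>xs. xs!1"] b by (simp add: numeral_2_eq_2)
  qed
  then show ?thesis
  proof (rule rf_cong)
    fix xs :: "nat list" assume "length xs = 1"
    then obtain a where "xs = [a]" by (auto simp: length_Suc_conv)
    then show "rec_nat 0 (\<lambda>k r. k) (hd xs) = xs!0 - 1"
      by (cases a) auto
  qed
qed

lemma rf_monus2: "rf 2 (\<lambda>xs. xs!1 - xs!0)"
proof -
  have "rf 2 (\<lambda>ys. rec_nat (tl ys ! 0) (\<lambda>k r. r - 1) (hd ys))"
    using rf_prim[OF rf_proj rf_comp1[OF rf_pred1 rf_proj], of 0 1 0] by (simp add: numeral_2_eq_2)
  then show ?thesis
  proof (rule rf_cong)
    fix xs :: "nat list" assume "length xs = 2"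
    then obtain a b where "xs = [a, b]" by (auto simp: numeral_2_eq_2 length_Suc_conv)
    then show "rec_nat (tl xs ! 0) (\<lambda>k r. r - 1) (hd xs) = xs!1 - xs!0"
      by (induction a arbitrary: xs) auto
  qed
qed

lemma rf_minus: "rf n f \<Longrightarrow> rf n g \<Longrightarrow> rf n (\<lambda>xs. f xs - g xs)"
  using rf_comp2[OF rf_monus2, of n g f] by simp

lemma rf_pow2: "rf n f \<Longrightarrow> rf n (\<lambda>xs. 2 ^ f xs)"
proof -
  have "rf 1 (\<lambda>ys. rec_nat 1 (\<lambda>k r. r + r) (hd ys))"
  proof -
    have a: "rf 0 (\<lambda>xs. 1)" by (rule rf_const)
    have b: "rf 2 (\<lambda>xs. xs!0 + xs!0)" by (intro rf_add rf_proj) auto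
    show ?thesis using rf_prim[OF a, of "\<lambda>xs. xs!0 + xs!0"] b by (simp add: numeral_2_eq_2)
  qed
  then have "rf 1 (\<lambda>xs. 2 ^ (xs!0))"
  proof (rule rf_cong)
    fix xs :: "nat list" assume "length xs = 1"
    then obtain a where "xs = [a]" by (auto simp: length_Suc_conv)
    then show "rec_nat 1 (\<lambda>k r. r + r) (hd xs) = (2::nat) ^ (xs!0)"
      by (induction a arbitrary: xs) auto
  qed
  then show "rf n f \<Longrightarrow> rf n (\<lambda>xs. 2 ^ f xs)" using rf_comp1 by fastforce
qed

lemma rf_sum_hd:
  assumes "rf (Suc n) f"
  shows "rf (Suc n) (\<lambda>ys. \<Sum>i<hd ys. f (i # tl ys))"
proof -
  have r1: "rf (Suc (Suc n)) (\<lambda>zs. f (map (\<lambda>i. zs ! (Suc i)) [0..<Suc n]))"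
    by (rule rf_reindex[OF assms]) auto
  have r2: "rf (Suc (Suc n)) (\<lambda>zs. zs!0 + f (map (\<lambda>i. zs ! (Suc i)) [0..<Suc n]))"
    by (intro rf_add r1 rf_proj) auto
  have "rf (Suc n) (\<lambda>ys. rec_nat 0 (\<lambda>k r. r + f (map (\<lambda>i. (r # k # tl ys) ! (Suc i)) [0..<Suc n])) (hd ys))"
    using rf_prim[OF rf_const r2] by simp
  then show ?thesis
  proof (rule rf_cong)
    fix ys :: "nat list" assume len: "length ys = Suc n"
    have m: "map (\<lambda>i. (r # k # tl ys) ! (Suc i)) [0..<Suc n] = k # tl ys" for r k
    proof (rule nth_equalityI)
      show "length (map (\<lambda>i. (r # k # tl ys) ! Suc i) [0..<Suc n]) = length (k # tl ys)"
        using len by simp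
    next
      fix i assume "i < length (map (\<lambda>i. (r # k # tl ys) ! Suc i) [0..<Suc n])"
      then show "map (\<lambda>i. (r # k # tl ys) ! Suc i) [0..<Suc n] ! i = (k # tl ys) ! i"
        by (simp del: upt_Suc)
    qed
    show "rec_nat 0 (\<lambda>k r. r + f (map (\<lambda>i. (r # k # tl ys) ! (Suc i)) [0..<Suc n])) (hd ys)
          = (\<Sum>i<hd ys. f (i # tl ys))"
    proof -
      have "rec_nat 0 (\<lambda>k r. r + f (k # tl ys)) K = (\<Sum>i<K. f (i # tl ys))" for K
        by (induction K) auto
      then show ?thesis unfolding m by simp
    qed
  qed
qed

lemma rf_sum:
  assumes "rf (Suc n) f" "rf n B"
  shows "rf n (\<lambda>xs. \<Sum>i<B xs. f (i # xs))"
proof -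
  have "rf n (\<lambda>xs. (\<lambda>ys. \<Sum>i<hd ys. f (i # tl ys)) (map (\<lambda>g. g xs) (B # map (\<lambda>i xs. xs ! i) [0..<n])))"
    by (rule rf_comp[OF rf_sum_hd[OF assms(1)]]) (auto intro: assms(2) rf_proj)
  then show ?thesis
  proof (rule rf_cong)
    fix xs :: "nat list" assume "length xs = n"
    then have "map (\<lambda>g. g xs) (map (\<lambda>i xs. xs ! i) [0..<n]) = xs"
      using map_nth[of xs] by (simp add: comp_def)
    then show "(\<lambda>ys. \<Sum>i<hd ys. f (i # tl ys)) (map (\<lambda>g. g xs) (B # map (\<lambda>i xs. xs ! i) [0..<n]))
       = (\<Sum>i<B xs. f (i # xs))" by simp
  qed
qed

lemma rf_tl: "rf n f \<Longrightarrow> rf (Suc n) (\<lambda>ys. f (tl ys))"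
proof -
  assume "rf n f"
  then have "rf (Suc n) (\<lambda>ys. f (map (\<lambda>i. ys ! Suc i) [0..<n]))"
    by (rule rf_reindex) auto
  then show ?thesis
  proof (rule rf_cong)
    fix ys :: "nat list" assume len: "length ys = Suc n"
    have "map (\<lambda>i. ys ! Suc i) [0..<n] = tl ys"
      by (rule nth_equalityI) (use len in \<open>auto simp: nth_tl\<close>)
    then show "f (map (\<lambda>i. ys ! Suc i) [0..<n]) = f (tl ys)" by simp
  qed
qed

definition rp :: "nat \<Rightarrow> (nat list \<Rightarrow> bool) \<Rightarrow> bool" where
  "rp n P \<longleftrightarrow> rf n (\<lambda>xs. if P xs then 1 else 0)"

lemma rp_less: "rf n f \<Longrightarrow> rf n g \<Longrightarrow> rp n (\<lambda>xs. f xs < g xs)"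
  unfolding rp_def
  by (rule rf_cong[of n "\<lambda>xs. 1 - (1 - (g xs - f xs))"]) (auto intro!: rf_minus rf_const)

lemma rp_le: "rf n f \<Longrightarrow> rf n g \<Longrightarrow> rp n (\<lambda>xs. f xs \<le> g xs)"
  using rp_less[of n f "\<lambda>xs. Suc (g xs)"] rf_succ[of n g] by (simp add: less_Suc_eq_le)

lemma rp_and: "rp n P \<Longrightarrow> rp n Q \<Longrightarrow> rp n (\<lambda>xs. P xs \<and> Q xs)"
  unfolding rp_def
  by (rule rf_cong[OF rf_mult, of n "\<lambda>xs. if P xs then 1 else 0" "\<lambda>xs. if Q xs then 1 else 0"]) auto

lemma rp_not: "rp n P \<Longrightarrow> rp n (\<lambda>xs. \<not> P xs)"
  unfolding rp_def
  by (rule rf_cong[OF rf_minus[OF rf_const], of n "\<lambda>xs. if P xs then 1 else 0" 1]) auto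

lemma rp_or: "rp n P \<Longrightarrow> rp n Q \<Longrightarrow> rp n (\<lambda>xs. P xs \<or> Q xs)"
  using rp_not[OF rp_and[OF rp_not rp_not], of n P Q] by simp

lemma rp_eq: "rf n f \<Longrightarrow> rf n g \<Longrightarrow> rp n (\<lambda>xs. f xs = g xs)"
  using rp_and[OF rp_le rp_le, of n f g g f] by (simp add: order_eq_iff)

lemma rf_if: "rp n P \<Longrightarrow> rf n f \<Longrightarrow> rf n g \<Longrightarrow> rf n (\<lambda>xs. if P xs then f xs else g xs)"
  unfolding rp_def
  by (rule rf_cong[of n "\<lambda>xs. (if P xs then 1 else 0) * f xs + (1 - (if P xs then 1 else 0)) * g xs"])
     (auto intro!: rf_add rf_mult rf_minus rf_const)

lemma sum_ind_card: "(\<Sum>i<(k::nat). if P i then 1 else 0) = card {i. i < k \<and> P i}"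
proof -
  have "(\<Sum>i<k. if P i then 1 else 0) = (\<Sum>i\<in>{i\<in>{..<k}. P i}. (1::nat))"
    by (rule sum.inter_filter[symmetric]) simp
  also have "{i\<in>{..<k}. P i} = {i. i < k \<and> P i}" by auto
  finally show ?thesis by simp
qed

lemma rp_ex: "rp (Suc n) P \<Longrightarrow> rf n B \<Longrightarrow> rp n (\<lambda>xs. \<exists>i<B xs. P (i # xs))"
proof -
  assume a: "rp (Suc n) P" "rf n B"
  have s: "rf n (\<lambda>xs. \<Sum>i<B xs. (\<lambda>ys. if P ys then 1 else 0) (i # xs))"
    using rf_sum[of n "\<lambda>ys. if P ys then 1 else 0" B] a by (simp add: rp_def)
  have "rp n (\<lambda>xs. 0 < (\<Sum>i<B xs. (\<lambda>ys. if P ys then (1::nat) else 0) (i # xs)))"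
    using rp_less[OF rf_const[of n 0] s] by simp
  then show ?thesis unfolding rp_def
    by (rule rf_cong) (auto simp: sum_ind_card card_gt_0_iff)
qed

lemma div_as_card: "(y::nat) > 0 \<Longrightarrow> x div y = card {i. i < x \<and> (i+1) * y \<le> x}"
proof -
  assume y: "y > 0"
  have "{i. i < x \<and> (i+1) * y \<le> x} = {i. i < x div y}"
  proof -
    have h1: "x div y \<le> x" by simp
    have h2: "(i+1) * y \<le> x \<longleftrightarrow> i < x div y" for i
      using y by (simp add: less_eq_div_iff_mult_less_eq Suc_le_eq[symmetric])
    have "(i < x \<and> (i+1) * y \<le> x) \<longleftrightarrow> i < x div y" for i
      using h1 h2[of i] by linarith
    then show ?thesis by blast
  qed
  then show ?thesis by simp
qed

lemma rf_div: "rf n f \<Longrightarrow> rf n g \<Longrightarrow> rf n (\<lambda>xs. f xs div g xs)"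
proof -
  assume a: "rf n f" "rf n g"
  have "rp (Suc n) (\<lambda>ys. (ys!0 + 1) * g (tl ys) \<le> f (tl ys))"
    by (intro rp_le rf_mult rf_add rf_proj rf_const rf_tl a) auto
  then have "rf n (\<lambda>xs. if g xs = 0 then 0 else
       (\<Sum>i<f xs. (\<lambda>ys. if (ys!0 + 1) * g (tl ys) \<le> f (tl ys) then 1 else 0) (i # xs)))"
    by (intro rf_if rp_eq a rf_const rf_sum[of n "\<lambda>ys. if (ys!0 + 1) * g (tl ys) \<le> f (tl ys) then 1 else 0" f]) (auto simp: rp_def)
  then show ?thesis
    by (rule rf_cong) (auto simp: sum_ind_card div_as_card)
qed

lemma rf_mod: "rf n f \<Longrightarrow> rf n g \<Longrightarrow> rf n (\<lambda>xs. f xs mod g xs)"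
proof -
  assume a: "rf n f" "rf n g"
  have "rf n (\<lambda>xs. f xs - g xs * (f xs div g xs))"
    by (intro rf_minus rf_mult rf_div a)
  then show ?thesis by (rule rf_cong) (simp add: minus_mult_div_eq_mod)
qed

lemma rf_triangle: "rf n f \<Longrightarrow> rf n (\<lambda>xs. triangle (f xs))"
  unfolding triangle_def by (intro rf_div rf_mult rf_succ rf_const)

lemma rf_prod_encode: "rf n f \<Longrightarrow> rf n g \<Longrightarrow> rf n (\<lambda>xs. prod_encode (f xs, g xs))"
  unfolding prod_encode_def by (auto intro!: rf_add rf_triangle)

lemma triangle_ge: "k \<le> triangle k"
  by (induction k) auto

lemma triangle_mono: "i \<le> j \<Longrightarrow> triangle i \<le> triangle j"
  by (induction j) (auto simp: le_Suc_eq)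

lemma decode_K:
  "card {i. i < c \<and> triangle (Suc i) \<le> c} = fst (prod_decode c) + snd (prod_decode c)"
proof -
  obtain a b where ab: "prod_decode c = (a, b)" by (cases "prod_decode c")
  then have c: "c = triangle (a + b) + a"
    using prod_decode_inverse[of c] unfolding prod_encode_def by simp
  have t: "triangle (Suc i) \<le> c \<longleftrightarrow> i < a + b" for i
  proof
    assume "triangle (Suc i) \<le> c"
    show "i < a + b"
    proof (rule ccontr)
      assume "\<not> i < a + b"
      then have "triangle (Suc (a + b)) \<le> triangle (Suc i)" by (intro triangle_mono) auto
      with \<open>triangle (Suc i) \<le> c\<close> c show False by simp
    qed
  next
    assume "i < a + b"
    then have "triangle (Suc i) \<le> triangle (a + b)" by (intro triangle_mono) auto
    then show "triangle (Suc i) \<le> c" using c by simp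
  qed
  have le: "a + b \<le> c" using c triangle_ge[of "a+b"] by simp
  have "(i < c \<and> triangle (Suc i) \<le> c) \<longleftrightarrow> i < a + b" for i
    using t[of i] le by linarith
  then have "{i. i < c \<and> triangle (Suc i) \<le> c} = {i. i < a + b}" by blast
  then show ?thesis using ab by simp
qed

lemma decode_fst: "fst (prod_decode c) = c - triangle (card {i. i < c \<and> triangle (Suc i) \<le> c})"
proof -
  obtain a b where ab: "prod_decode c = (a, b)" by (cases "prod_decode c")
  then have c: "c = triangle (a + b) + a"
    using prod_decode_inverse[of c] unfolding prod_encode_def by simp
  show ?thesis unfolding decode_K ab using c by simp
qed

lemma rf_fst_decode: "rf n f \<Longrightarrow> rf n (\<lambda>xs. fst (prod_decode (f xs)))"
proof -
  assume a: "rf n f"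
  have "rp (Suc n) (\<lambda>ys. triangle (Suc (ys!0)) \<le> f (tl ys))"
    by (intro rp_le rf_triangle rf_succ rf_proj rf_tl a) auto
  then have "rf n (\<lambda>xs. f xs - triangle (\<Sum>i<f xs. (\<lambda>ys. if triangle (Suc (ys!0)) \<le> f (tl ys) then 1 else 0) (i # xs)))"
    by (intro rf_minus rf_triangle a rf_sum[of n "\<lambda>ys. if triangle (Suc (ys!0)) \<le> f (tl ys) then 1 else 0" f]) (auto simp: rp_def)
  then show ?thesis
    by (rule rf_cong) (simp only: sum_ind_card nth_Cons_0 list.sel decode_fst[symmetric])
qed

lemma rf_snd_decode: "rf n f \<Longrightarrow> rf n (\<lambda>xs. snd (prod_decode (f xs)))"
proof -
  assume a: "rf n f"
  have "rp (Suc n) (\<lambda>ys. triangle (Suc (ys!0)) \<le> f (tl ys))"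
    by (intro rp_le rf_triangle rf_succ rf_proj rf_tl a) auto
  then have "rf n (\<lambda>xs. (\<Sum>i<f xs. (\<lambda>ys. if triangle (Suc (ys!0)) \<le> f (tl ys) then 1 else 0) (i # xs))
      - fst (prod_decode (f xs)))"
    by (intro rf_minus rf_fst_decode a rf_sum[of n "\<lambda>ys. if triangle (Suc (ys!0)) \<le> f (tl ys) then 1 else 0" f]) (auto simp: rp_def)
  then show ?thesis
    by (rule rf_cong) (simp only: sum_ind_card nth_Cons_0 list.sel decode_K diff_add_inverse)
qed

lemma recursive_nat_rf: "recursive_nat g \<longleftrightarrow> rf 1 (\<lambda>xs. g (xs!0))"
  unfolding recursive_nat_def rf_def
proof
  assume "\<exists>c. \<forall>n. eval c [n] (g n)"
  then obtain c where c: "\<forall>n. eval c [n] (g n)" by blast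
  have "eval c xs (g (xs ! 0))" if "length xs = 1" for xs
  proof -
    from that obtain y where "xs = [y]" by (auto simp: length_Suc_conv)
    then show ?thesis using c by simp
  qed
  then show "\<exists>c. \<forall>xs. length xs = 1 \<longrightarrow> eval c xs (g (xs ! 0))" by blast
next
  assume "\<exists>c. \<forall>xs. length xs = 1 \<longrightarrow> eval c xs (g (xs ! 0))"
  then obtain c where "\<forall>xs. length xs = 1 \<longrightarrow> eval c xs (g (xs ! 0))" by blast
  then have "eval c [n] (g n)" for n by (metis length_Cons list.size(3) nth_Cons_0 One_nat_def)
  then show "\<exists>c. \<forall>n. eval c [n] (g n)" by blast
qed

lemma rf_app: "recursive_nat g \<Longrightarrow> rf n f \<Longrightarrow> rf n (\<lambda>xs. g (f xs))"
  unfolding recursive_nat_rf using rf_comp1 by fastforce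


section \<open>Encoding of situations\<close>

lemma enc_append: "enc_sit (s @ t) = enc_sit s + 2 ^ length s * enc_sit t"
  by (induction s) (auto simp: algebra_simps)

lemma enc_lower: "2 ^ length s \<le> enc_sit s + 1"
  by (induction s) auto

lemma enc_upper: "enc_sit s + 2 \<le> 2 ^ (length s + 1)"
  by (induction s) auto

lemma enc_inj: "enc_sit s = enc_sit t \<Longrightarrow> s = t"
proof (induction s arbitrary: t)
  case Nil then show ?case by (cases t) (auto split: if_splits)
next
  case (Cons a s)
  then show ?case
  proof (cases t)
    case Nil then show ?thesis using Cons.prems by (auto split: if_splits)
  next
    case (Cons b t')
    with Cons.prems have "a = b" by (cases a; cases b) (simp_all, presburger+)
    with Cons.prems Cons have "enc_sit s = enc_sit t'" by auto
    then show ?thesis using Cons.IH \<open>a = b\<close> Cons by auto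
  qed
qed

fun dec_sit :: "nat \<Rightarrow> sit" where
  "dec_sit 0 = []"
| "dec_sit (Suc m) = odd m # dec_sit (m div 2)"

lemma enc_dec: "enc_sit (dec_sit e) = e"
  by (induction e rule: dec_sit.induct) auto

lemma length_from_enc:
  assumes "2 ^ n \<le> enc_sit s + 1" "enc_sit s + 2 \<le> 2 ^ (n + 1)"
  shows "length s = n"
proof (rule ccontr)
  assume "length s \<noteq> n"
  then consider "length s < n" | "n < length s" by linarith
  then show False
  proof cases
    case 1
    then have "(2::nat) ^ (length s + 1) \<le> 2 ^ n" by (intro power_increasing) auto
    then show False using enc_upper[of s] assms(1) by linarith
  next
    case 2
    then have "(2::nat) ^ (n + 1) \<le> 2 ^ length s" by (intro power_increasing) auto
    then show False using enc_lower[of s] assms(2) by linarith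
  qed
qed

lemma enc_snoc: "enc_sit (s @ [x]) = enc_sit s + 2 ^ length s * (if x then 2 else 1)"
  by (simp add: enc_append)

lemma mod_window1:
  fixes x m :: nat
  assumes "x < 2 * m"
  shows "x mod m = (if x < m then x else x - m)"
proof (cases "x < m")
  case False
  then have "x mod m = (x - m) mod m" by (simp add: le_mod_geq)
  also have "\<dots> = x - m" using assms False by (intro mod_less) linarith
  finally show ?thesis using False by simp
qed simp

lemma mod_window_eq:
  fixes x y m :: nat
  assumes "m \<le> x + 1" "x + 2 \<le> 2 * m" "m \<le> y + 1" "y + 2 \<le> 2 * m" "x mod m = y mod m"
  shows "x = y"
proof -
  have "x mod m = (if x < m then x else x - m)" "y mod m = (if y < m then y else y - m)"
    using assms by (intro mod_window1; linarith)+
  then show ?thesis using assms by (auto split: if_splits)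
qed

lemma prefix_code:
  assumes "length s0 = N"
  shows "(2 ^ N \<le> enc_sit s + 1 \<and> enc_sit s mod 2 ^ N = enc_sit s0 mod 2 ^ N) \<longleftrightarrow> take N s = s0"
proof
  assume "take N s = s0"
  then have s: "s = s0 @ drop N s" using append_take_drop_id[of N s] by simp
  have "enc_sit s = enc_sit s0 + 2 ^ N * enc_sit (drop N s)"
    by (subst s) (simp add: enc_append assms)
  moreover have "2 ^ N \<le> enc_sit s0 + 1" using enc_lower[of s0] assms by simp
  ultimately show "2 ^ N \<le> enc_sit s + 1 \<and> enc_sit s mod 2 ^ N = enc_sit s0 mod 2 ^ N"
    by simp
next
  assume a: "2 ^ N \<le> enc_sit s + 1 \<and> enc_sit s mod 2 ^ N = enc_sit s0 mod 2 ^ N"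
  have len: "N \<le> length s"
  proof (rule ccontr)
    assume "\<not> N \<le> length s"
    then have "(2::nat) ^ (length s + 1) \<le> 2 ^ N" by (intro power_increasing) auto
    then show False using enc_upper[of s] a by linarith
  qed
  define u where "u = take N s"
  have lu: "length u = N" using len by (simp add: u_def)
  have s: "s = u @ drop N s" by (simp add: u_def)
  have "enc_sit s = enc_sit u + 2 ^ N * enc_sit (drop N s)"
    by (subst s) (simp add: enc_append lu)
  then have "enc_sit s mod 2 ^ N = enc_sit u mod 2 ^ N" by simp
  then have h5: "enc_sit u mod 2 ^ N = enc_sit s0 mod 2 ^ N" using a by simp
  have h1: "2 ^ N \<le> enc_sit u + 1" and h2: "enc_sit u + 2 \<le> 2 * 2 ^ N"
    using enc_lower[of u] enc_upper[of u] lu by simp_all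
  have h3: "2 ^ N \<le> enc_sit s0 + 1" and h4: "enc_sit s0 + 2 \<le> 2 * 2 ^ N"
    using enc_lower[of s0] enc_upper[of s0] assms by simp_all
  have "enc_sit u = enc_sit s0" by (rule mod_window_eq[OF h1 h2 h3 h4 h5])
  then have "u = s0" by (rule enc_inj)
  then show "take N s = s0" unfolding u_def .
qed

section \<open>Upper expectations\<close>

lemma Exp_lin: "Exp r f = f False + r * (f True - f False)"
  unfolding Exp_def by (simp add: algebra_simps)

lemma UExp_eq:
  assumes "fst I \<le> snd I"
  shows "UExp I f = max (Exp (fst I) f) (Exp (snd I) f)"
proof -
  have le: "Exp r f \<le> max (Exp (fst I) f) (Exp (snd I) f)" if "r \<in> {fst I..snd I}" for r
  proof (cases "f True - f False \<ge> 0")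
    case True
    then have "r * (f True - f False) \<le> snd I * (f True - f False)"
      using that by (intro mult_right_mono) auto
    then show ?thesis unfolding Exp_lin by linarith
  next
    case False
    then have "r * (f True - f False) \<le> fst I * (f True - f False)"
      using that by (intro mult_right_mono_neg) auto
    then show ?thesis unfolding Exp_lin by linarith
  qed
  have ne: "{fst I..snd I} \<noteq> {}" using assms by simp
  have bdd: "bdd_above ((\<lambda>r. Exp r f) ` {fst I..snd I})"
    using le by (intro bdd_aboveI2) 
  show ?thesis unfolding UExp_def
  proof (rule antisym)
    show "(SUP r\<in>{fst I..snd I}. Exp r f) \<le> max (Exp (fst I) f) (Exp (snd I) f)"
      by (rule cSUP_least[OF ne le])
    show "max (Exp (fst I) f) (Exp (snd I) f) \<le> (SUP r\<in>{fst I..snd I}. Exp r f)"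
      using assms by (auto intro!: cSUP_upper[OF _ bdd])
  qed
qed

lemma UExp_single: "UExp (r, r) f = Exp r f"
  using UExp_eq[of "(r, r)" f] by simp

lemma UExp_le0_iff:
  "fst I \<le> snd I \<Longrightarrow> UExp I f \<le> 0 \<longleftrightarrow> Exp (fst I) f \<le> 0 \<and> Exp (snd I) f \<le> 0"
  using UExp_eq by simp

lemma Exp_scale: "Exp r (\<lambda>x. f x / c) = Exp r f / c"
  unfolding Exp_def by (simp add: diff_divide_distrib add_divide_distrib algebra_simps)


section \<open>Decoding rationals\<close>

definition NP :: "nat \<Rightarrow> nat" where
  "NP c = (if fst (prod_decode c) mod 2 = 0 then fst (prod_decode c) div 2 else 0)"
definition NN :: "nat \<Rightarrow> nat" where
  "NN c = (if fst (prod_decode c) mod 2 = 0 then 0 else fst (prod_decode c) div 2 + 1)"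
definition DN :: "nat \<Rightarrow> nat" where
  "DN c = Suc (snd (prod_decode c))"

lemma dec_rat_NP: "dec_rat c = (real (NP c) - real (NN c)) / real (DN c)"
proof -
  obtain a b where ab: "prod_decode c = (a, b)" by (cases "prod_decode c")
  show ?thesis
    unfolding dec_rat_def NP_def NN_def DN_def ab int_decode_def sum_decode_def
    by (auto simp: even_iff_mod_2_eq_zero)
qed

lemma NP_NN: "NP c = 0 \<or> NN c = 0"
  unfolding NP_def NN_def by auto

lemma DN_pos: "DN c > 0"
  unfolding DN_def by simp

lemma rf_NP: "rf n f \<Longrightarrow> rf n (\<lambda>xs. NP (f xs))"
  unfolding NP_def by (intro rf_if rp_eq rf_mod rf_div rf_fst_decode rf_const)

lemma rf_NN: "rf n f \<Longrightarrow> rf n (\<lambda>xs. NN (f xs))"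
  unfolding NN_def by (intro rf_if rp_eq rf_mod rf_div rf_fst_decode rf_const rf_add)

lemma rf_DN: "rf n f \<Longrightarrow> rf n (\<lambda>xs. DN (f xs))"
  unfolding DN_def by (intro rf_succ rf_snd_decode)

section \<open>The badness predicate\<close>

definition badq :: "(nat \<Rightarrow> nat) \<Rightarrow> nat \<Rightarrow> nat \<Rightarrow> nat \<Rightarrow> nat \<Rightarrow> bool" where
  "badq g a b e n \<longleftrightarrow>
     a * NN (g (e + 2^n * 2)) * DN (g (e + 2^n)) * DN (g e)
     + (b - a) * NN (g (e + 2^n)) * DN (g (e + 2^n * 2)) * DN (g e)
     + b * NP (g e) * DN (g (e + 2^n)) * DN (g (e + 2^n * 2))
   < a * NP (g (e + 2^n * 2)) * DN (g (e + 2^n)) * DN (g e)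
     + (b - a) * NP (g (e + 2^n)) * DN (g (e + 2^n * 2)) * DN (g e)
     + b * NN (g e) * DN (g (e + 2^n)) * DN (g (e + 2^n * 2))"

lemma key_arith:
  fixes a b P M D P0 M0 D0 P1 M1 D1 :: nat
  assumes "b > 0" "a \<le> b" "D > 0" "D0 > 0" "D1 > 0"
  shows "(real a / real b) * ((real P1 - real M1) / real D1 - (real P - real M) / real D)
        + (1 - real a / real b) * ((real P0 - real M0) / real D0 - (real P - real M) / real D) > 0
    \<longleftrightarrow> a * M1 * D0 * D + (b - a) * M0 * D1 * D + b * P * D0 * D1
        < a * P1 * D0 * D + (b - a) * P0 * D1 * D + b * M * D0 * D1"
proof -
  define X where "X = a * P1 * D0 * D + (b - a) * P0 * D1 * D + b * M * D0 * D1"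
  define Y where "Y = a * M1 * D0 * D + (b - a) * M0 * D1 * D + b * P * D0 * D1"
  have ba: "real (b - a) = real b - real a" using assms by (simp add: of_nat_diff)
  have "(real a / real b) * ((real P1 - real M1) / real D1 - (real P - real M) / real D)
        + (1 - real a / real b) * ((real P0 - real M0) / real D0 - (real P - real M) / real D)
      = (real X - real Y) / (real b * real D * real D0 * real D1)"
    unfolding X_def Y_def using assms
    by (simp add: ba field_simps)
  moreover have "real b * real D * real D0 * real D1 > 0" using assms by simp
  ultimately show ?thesis
    unfolding X_def[symmetric] Y_def[symmetric]
    by (simp add: divide_pos_pos zero_less_divide_iff)
qed

lemma bad_iff:
  assumes T: "\<And>s. T s = dec_rat (g (enc_sit s))"
    and r: "r = real a / real b" and b: "b > 0" "a \<le> b"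
  shows "Exp r (\<lambda>x. T (s @ [x]) - T s) > 0 \<longleftrightarrow> badq g a b (enc_sit s) (length s)"
proof -
  have "Exp r (\<lambda>x. T (s @ [x]) - T s) =
      r * (T (s @ [True]) - T s) + (1 - r) * (T (s @ [False]) - T s)"
    unfolding Exp_def by simp
  also have "\<dots> = (real a / real b) *
      ((real (NP (g (enc_sit s + 2 ^ length s * 2))) - real (NN (g (enc_sit s + 2 ^ length s * 2))))
         / real (DN (g (enc_sit s + 2 ^ length s * 2)))
       - (real (NP (g (enc_sit s))) - real (NN (g (enc_sit s)))) / real (DN (g (enc_sit s))))
     + (1 - real a / real b) *
      ((real (NP (g (enc_sit s + 2 ^ length s))) - real (NN (g (enc_sit s + 2 ^ length s))))
         / real (DN (g (enc_sit s + 2 ^ length s)))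
       - (real (NP (g (enc_sit s))) - real (NN (g (enc_sit s)))) / real (DN (g (enc_sit s))))"
    unfolding T r enc_snoc dec_rat_NP by simp
  finally show ?thesis
    unfolding badq_def using key_arith[OF b DN_pos DN_pos DN_pos] by simp
qed

definition sel :: "(nat \<Rightarrow> nat) \<Rightarrow> nat \<Rightarrow> nat \<Rightarrow> nat \<Rightarrow> bool" where
  "sel g a b n \<longleftrightarrow> (\<exists>e<2^(n+1). 2^n \<le> e + 1 \<and> e + 2 \<le> 2^(n+1) \<and> badq g a b e n)"

lemma sel_iff:
  assumes T: "\<And>s. T s = dec_rat (g (enc_sit s))"
    and r: "r = real a / real b" and b: "b > 0" "a \<le> b"
  shows "sel g a b n \<longleftrightarrow> (\<exists>s. length s = n \<and> Exp r (\<lambda>x. T (s @ [x]) - T s) > 0)"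
proof
  assume "sel g a b n"
  then obtain e where e: "2^n \<le> e + 1" "e + 2 \<le> 2^(n+1)" "badq g a b e n"
    unfolding sel_def by blast
  define s where "s = dec_sit e"
  have es: "enc_sit s = e" unfolding s_def by (rule enc_dec)
  have ls: "length s = n" by (rule length_from_enc) (use e es in auto)
  show "\<exists>s. length s = n \<and> Exp r (\<lambda>x. T (s @ [x]) - T s) > 0"
    using bad_iff[of T g, OF T r b, of s] e es ls by auto
next
  assume "\<exists>s. length s = n \<and> Exp r (\<lambda>x. T (s @ [x]) - T s) > 0"
  then obtain s where s: "length s = n" "Exp r (\<lambda>x. T (s @ [x]) - T s) > 0" by blast
  have "badq g a b (enc_sit s) n" using bad_iff[of T g, OF T r b, of s] s by simp
  moreover have "2^n \<le> enc_sit s + 1" "enc_sit s + 2 \<le> 2^(n+1)"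
    using enc_lower[of s] enc_upper[of s] s by auto
  ultimately show "sel g a b n" unfolding sel_def
    by (intro exI[of _ "enc_sit s"]) auto
qed

lemma rp_badq:
  assumes g: "recursive_nat g" and "i < n" "j < n"
  shows "rp n (\<lambda>ys. badq g a b (ys!i) (ys!j))"
proof -
  note gR = rf_app[OF g]
  show ?thesis unfolding badq_def
    by (intro rp_less rf_add rf_mult rf_const rf_NP rf_NN rf_DN gR rf_pow2 rf_proj) (use assms in auto)
qed

lemma sel_rec:
  assumes g: "recursive_nat g"
  shows "recursive_temporal_sel (sel g a b)"
proof -
  have p: "rp (Suc 1) (\<lambda>ys. 2^(ys!1) \<le> ys!0 + 1 \<and> ys!0 + 2 \<le> 2^(ys!1 + 1) \<and> badq g a b (ys!0) (ys!1))"
    by (intro rp_and rp_le rf_add rf_pow2 rf_proj rf_const rp_badq[OF g]) auto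
  have "rp 1 (\<lambda>xs. \<exists>i<2^(xs!0 + 1). (\<lambda>ys. 2^(ys!1) \<le> ys!0 + 1 \<and> ys!0 + 2 \<le> 2^(ys!1 + 1)
      \<and> badq g a b (ys!0) (ys!1)) (i # xs))"
    by (rule rp_ex[of 1, OF p]) (intro rf_pow2 rf_add rf_proj rf_const; simp)
  then have "rp 1 (\<lambda>xs. sel g a b (xs!0))"
    unfolding sel_def by simp
  then show ?thesis
    unfolding recursive_temporal_sel_def recursive_nat_rf rp_def by simp
qed


section \<open>Selections and weak Church randomness\<close>

lemma count_real: "(\<Sum>k<(n::nat). of_bool (S k) :: real) = real (card {k. k < n \<and> S k})"
proof -
  have "(\<Sum>k<n. of_bool (S k) :: real) = (\<Sum>k<n. real (if S k then 1 else 0))"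
    by (rule sum.cong) auto
  also have "\<dots> = real (\<Sum>k<n. if S k then 1 else 0)"
    by (simp only: of_nat_sum)
  finally have "(\<Sum>k<n. of_bool (S k) :: real) = real (\<Sum>k<n. if S k then 1 else 0)" .
  then show ?thesis using sum_ind_card[where k=n and P=S] by simp
qed

lemma count_unbounded:
  assumes inf: "infinite {n. S n}"
  shows "filterlim (\<lambda>n. \<Sum>k<n. of_bool (S k) :: real) at_top sequentially"
  unfolding filterlim_at_top count_real
proof
  fix Z :: real
  obtain B where B: "finite B" "card B = nat \<lceil>Z\<rceil>" "B \<subseteq> {n. S n}"
    using infinite_arbitrarily_large[OF inf] by blast
  define n0 where "n0 = Suc (Max (insert 0 B))"
  have "Z \<le> real (card {k. k < n \<and> S k})" if "n \<ge> n0" for n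
  proof -
    have "B \<subseteq> {k. k < n \<and> S k}"
    proof
      fix x assume "x \<in> B"
      then have "x \<le> Max (insert 0 B)" using B(1) by simp
      then show "x \<in> {k. k < n \<and> S k}" using that \<open>x \<in> B\<close> B(3) n0_def by auto
    qed
    then have "card B \<le> card {k. k < n \<and> S k}" by (intro card_mono) auto
    then show ?thesis using B(2) by linarith
  qed
  then show "eventually (\<lambda>n. Z \<le> real (card {k. k < n \<and> S k})) sequentially"
    unfolding eventually_sequentially by blast
qed

lemma count_pos:
  assumes inf: "infinite {n. S n}"
  shows "eventually (\<lambda>n. (\<Sum>k<n. of_bool (S k) :: real) > 0) sequentially"
proof -
  have "eventually (\<lambda>n. 1 \<le> (\<Sum>k<n. of_bool (S k) :: real)) sequentially"
    using count_unbounded[OF inf] unfolding filterlim_at_top by blast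
  then show ?thesis by (rule eventually_mono) linarith
qed

lemma wch_false:
  assumes wch: "wCH_random (const_fs I) w" and I: "0 < fst I"
    and S: "recursive_temporal_sel S" and inf: "infinite {n. S n}"
    and F: "\<And>n. S n \<Longrightarrow> \<not> w n"
  shows False
proof -
  have lim: "filterlim (\<lambda>n. \<Sum>k<n. of_bool (S k) :: real) at_top sequentially"
    by (rule count_unbounded[OF inf])
  have h0: "liminf (\<lambda>n. ereal ((\<Sum>k<n. of_bool (S k) * (of_bool (w k) - fst (const_fs I (prefix w k))))
                          / (\<Sum>k<n. of_bool (S k)))) \<ge> 0"
    using wch S lim unfolding wCH_random_def by blast
  have ev: "eventually (\<lambda>n. ereal ((\<Sum>k<n. of_bool (S k) * (of_bool (w k) - fst (const_fs I (prefix w k))))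
                          / (\<Sum>k<n. of_bool (S k))) = ereal (- fst I)) sequentially"
    using count_pos[OF inf]
  proof (rule eventually_mono)
    fix n assume pos: "(\<Sum>k<n. of_bool (S k) :: real) > 0"
    have "(\<Sum>k<n. of_bool (S k) * (of_bool (w k) - fst (const_fs I (prefix w k))))
        = (\<Sum>k<n. of_bool (S k) * (- fst I))"
      by (rule sum.cong) (auto simp: const_fs_def F)
    also have "\<dots> = (\<Sum>k<n. of_bool (S k)) * (- fst I)" by (rule sum_distrib_right[symmetric])
    finally have num: "(\<Sum>k<n. of_bool (S k) * (of_bool (w k) - fst (const_fs I (prefix w k))))
        = (\<Sum>k<n. of_bool (S k)) * (- fst I)" .
    define X where "X = (\<Sum>k<n. of_bool (S k) :: real)"
    have X0: "X \<noteq> 0" using pos unfolding X_def by linarith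
    show "ereal ((\<Sum>k<n. of_bool (S k) * (of_bool (w k) - fst (const_fs I (prefix w k))))
                          / (\<Sum>k<n. of_bool (S k))) = ereal (- fst I)"
      unfolding num X_def[symmetric] by (simp only: nonzero_mult_div_cancel_left[OF X0])
  qed
  from ev have "liminf (\<lambda>n. ereal ((\<Sum>k<n. of_bool (S k) * (of_bool (w k) - fst (const_fs I (prefix w k))))
                          / (\<Sum>k<n. of_bool (S k)))) = liminf (\<lambda>_. ereal (- fst I))"
    by (rule Liminf_eq)
  also have "\<dots> = ereal (- fst I)" by (rule Liminf_const) simp
  finally have lim_eq: "liminf (\<lambda>n. ereal ((\<Sum>k<n. of_bool (S k) * (of_bool (w k) - fst (const_fs I (prefix w k))))
                          / (\<Sum>k<n. of_bool (S k)))) = ereal (- fst I)"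
    .
  show False using h0 lim_eq I by simp
qed

lemma wch_true:
  assumes wch: "wCH_random (const_fs I) w" and I: "snd I < 1"
    and S: "recursive_temporal_sel S" and inf: "infinite {n. S n}"
    and F: "\<And>n. S n \<Longrightarrow> w n"
  shows False
proof -
  have lim: "filterlim (\<lambda>n. \<Sum>k<n. of_bool (S k) :: real) at_top sequentially"
    by (rule count_unbounded[OF inf])
  have h0: "limsup (\<lambda>n. ereal ((\<Sum>k<n. of_bool (S k) * (of_bool (w k) - snd (const_fs I (prefix w k))))
                          / (\<Sum>k<n. of_bool (S k)))) \<le> 0"
    using wch S lim unfolding wCH_random_def by blast
  have ev: "eventually (\<lambda>n. ereal ((\<Sum>k<n. of_bool (S k) * (of_bool (w k) - snd (const_fs I (prefix w k))))
                          / (\<Sum>k<n. of_bool (S k))) = ereal (1 - snd I)) sequentially"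
    using count_pos[OF inf]
  proof (rule eventually_mono)
    fix n assume pos: "(\<Sum>k<n. of_bool (S k) :: real) > 0"
    have "(\<Sum>k<n. of_bool (S k) * (of_bool (w k) - snd (const_fs I (prefix w k))))
        = (\<Sum>k<n. of_bool (S k) * (1 - snd I))"
      by (rule sum.cong) (auto simp: const_fs_def F)
    also have "\<dots> = (\<Sum>k<n. of_bool (S k)) * (1 - snd I)" by (rule sum_distrib_right[symmetric])
    finally have num: "(\<Sum>k<n. of_bool (S k) * (of_bool (w k) - snd (const_fs I (prefix w k))))
        = (\<Sum>k<n. of_bool (S k)) * (1 - snd I)" .
    define X where "X = (\<Sum>k<n. of_bool (S k) :: real)"
    have X0: "X \<noteq> 0" using pos unfolding X_def by linarith
    show "ereal ((\<Sum>k<n. of_bool (S k) * (of_bool (w k) - snd (const_fs I (prefix w k))))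
                          / (\<Sum>k<n. of_bool (S k))) = ereal (1 - snd I)"
      unfolding num X_def[symmetric] by (simp only: nonzero_mult_div_cancel_left[OF X0])
  qed
  from ev have "limsup (\<lambda>n. ereal ((\<Sum>k<n. of_bool (S k) * (of_bool (w k) - snd (const_fs I (prefix w k))))
                          / (\<Sum>k<n. of_bool (S k)))) = limsup (\<lambda>_. ereal (1 - snd I))"
    by (rule Limsup_eq)
  also have "\<dots> = ereal (1 - snd I)" by (rule Limsup_const) simp
  finally have lim_eq: "limsup (\<lambda>n. ereal ((\<Sum>k<n. of_bool (S k) * (of_bool (w k) - snd (const_fs I (prefix w k))))
                          / (\<Sum>k<n. of_bool (S k)))) = ereal (1 - snd I)"
    .
  show False using h0 lim_eq I by simp
qed

lemma rat_nat_frac: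
  assumes "r \<in> \<rat>" "0 \<le> r" "r \<le> 1"
  obtains a b :: nat where "b > 0" "a \<le> b" "r = real a / real b"
proof -
  obtain x y :: int where xy: "y > 0" "r = of_int x / of_int y"
    using Rats_cases'[OF assms(1)] by metis
  have x0: "x \<ge> 0"
  proof (rule ccontr)
    assume "\<not> x \<ge> 0"
    then have "of_int x / of_int y < (0::real)" using xy(1) by (simp add: divide_neg_pos)
    then show False using assms(2) xy(2) by simp
  qed
  have "of_int x \<le> (of_int y :: real)"
    using assms(3) xy by (simp add: divide_le_eq_1)
  then have xy': "x \<le> y" by simp
  show ?thesis
    by (rule that[of "nat y" "nat x"]) (use xy x0 xy' in auto)
qed

lemma eventually_good:
  assumes p: "p \<in> \<rat>" "0 \<le> p" and q: "q \<in> \<rat>" "q \<le> 1" and pq: "p < q"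
    and I: "0 < fst I" "snd I < 1"
    and wch: "wCH_random (const_fs I) w"
    and T: "T \<in> rec_tests (phi_sw w p q)"
  shows "\<exists>N. \<forall>s. N \<le> length s \<longrightarrow> UExp (p, q) (\<lambda>x. T (s @ [x]) - T s) \<le> 0"
proof -
  obtain g where g: "recursive_nat g" and Tg: "\<And>s. T s = dec_rat (g (enc_sit s))"
    using T unfolding rec_tests_def recursive_rat_sit_def by blast
  have sm: "UExp (phi_sw w p q s) (\<lambda>x. T (s @ [x]) - T s) \<le> 0" for s
    using T unfolding rec_tests_def test_supermartingale_def supermartingale_def by blast
  have p1: "p \<le> 1" and q0: "0 \<le> q" using p q pq by auto
  obtain ap bp :: nat where P: "bp > 0" "ap \<le> bp" "p = real ap / real bp"
    using rat_nat_frac[OF p(1) p(2) p1] by blast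
  obtain aq bq :: nat where Q: "bq > 0" "aq \<le> bq" "q = real aq / real bq"
    using rat_nat_frac[OF q(1) q0 q(2)] by blast
  have fq: "finite {n. sel g aq bq n}"
  proof (rule ccontr)
    assume "infinite {n. sel g aq bq n}"
    moreover have "\<not> w n" if "sel g aq bq n" for n
    proof
      assume wn: "w n"
      from that obtain s where s: "length s = n" "Exp q (\<lambda>x. T (s @ [x]) - T s) > 0"
        using sel_iff[of T g q aq bq n, OF Tg Q(3) Q(1) Q(2)] by blast
      have "phi_sw w p q s = (q, q)" using wn s(1) by (simp add: phi_sw_def)
      then show False using sm[of s] s(2) by (simp add: UExp_single)
    qed
    ultimately show False using wch_false[OF wch I(1) sel_rec[OF g]] by blast
  qed
  have fp: "finite {n. sel g ap bp n}"
  proof (rule ccontr)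
    assume "infinite {n. sel g ap bp n}"
    moreover have "w n" if "sel g ap bp n" for n
    proof (rule ccontr)
      assume wn: "\<not> w n"
      from that obtain s where s: "length s = n" "Exp p (\<lambda>x. T (s @ [x]) - T s) > 0"
        using sel_iff[of T g p ap bp n, OF Tg P(3) P(1) P(2)] by blast
      have "phi_sw w p q s = (p, p)" using wn s(1) by (simp add: phi_sw_def)
      then show False using sm[of s] s(2) by (simp add: UExp_single)
    qed
    ultimately show False using wch_true[OF wch I(2) sel_rec[OF g]] by blast
  qed
  obtain N1 where N1: "\<And>n. sel g aq bq n \<Longrightarrow> n \<le> N1"
    using fq by (auto simp: finite_nat_set_iff_bounded_le)
  obtain N2 where N2: "\<And>n. sel g ap bp n \<Longrightarrow> n \<le> N2"
    using fp by (auto simp: finite_nat_set_iff_bounded_le)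
  have "UExp (p, q) (\<lambda>x. T (s @ [x]) - T s) \<le> 0" if "Suc (max N1 N2) \<le> length s" for s
  proof -
    have "\<not> sel g aq bq (length s)" "\<not> sel g ap bp (length s)"
      using N1 N2 that by force+
    then have "\<not> Exp q (\<lambda>x. T (s @ [x]) - T s) > 0" "\<not> Exp p (\<lambda>x. T (s @ [x]) - T s) > 0"
      using sel_iff[of T g q aq bq "length s", OF Tg Q(3) Q(1) Q(2)]
        sel_iff[of T g p ap bp "length s", OF Tg P(3) P(1) P(2)] by blast+
    then show ?thesis using UExp_le0_iff[of "(p, q)"] pq by simp
  qed
  then show ?thesis by blast
qed


lemma take_child:
  assumes "length s0 = N" "take N s \<noteq> s0" "take N (s @ [x]) = s0"
  shows "s @ [x] = s0"
proof (cases "N \<le> length s")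
  case True
  then have "take N (s @ [x]) = take N s" by simp
  then show ?thesis using assms by simp
next
  case False
  then have "take N (s @ [x]) = s @ [x]" by simp
  then show ?thesis using assms by simp
qed

lemma int_decode_even: "int_decode (2 * k) = int k"
  unfolding int_decode_def sum_decode_def by simp

lemma int_decode_odd: "k > 0 \<Longrightarrow> int_decode (2 * k - 1) = - int k"
proof -
  assume k: "k > 0"
  have o: "odd (2 * k - 1)" using k by simp
  have d: "(2 * k - 1) div 2 = k - 1" using k by simp
  show ?thesis unfolding int_decode_def sum_decode_def using o d k by simp
qed

lemma dec_rat_encode: "dec_rat (prod_encode (a, b)) = of_int (int_decode a) / of_nat (Suc b)"
  unfolding dec_rat_def by simp

lemma UExp_zero: "a \<le> b \<Longrightarrow> UExp (a, b) (\<lambda>x. 0) = 0"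
  using UExp_eq[of "(a, b)" "\<lambda>x. 0"] by (simp add: Exp_def)

lemma restart:
  assumes T: "T \<in> rec_tests (phi_sw w p q)" and pq: "p \<le> q"
    and good: "\<And>s. N \<le> length s \<Longrightarrow> UExp (p, q) (\<lambda>x. T (s @ [x]) - T s) \<le> 0"
    and s0: "length s0 = N"
  shows "\<exists>T'\<in>rec_tests (const_fs (p, q)). \<forall>s. take N s = s0 \<longrightarrow> T' s = T s / T s0"
proof -
  obtain g where g: "recursive_nat g" and Tg: "\<And>s. T s = dec_rat (g (enc_sit s))"
    using T unfolding rec_tests_def recursive_rat_sit_def by blast
  have Tpos: "T s > 0" for s using T unfolding rec_tests_def by blast
  have Trat: "T s \<in> \<rat>" for s using T unfolding rec_tests_def by blast
  define c0 where "c0 = g (enc_sit s0)"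
  define P0 where "P0 = NP c0"
  define D0 where "D0 = DN c0"
  have Ts0: "T s0 = (real (NP c0) - real (NN c0)) / real (DN c0)"
    unfolding Tg c0_def dec_rat_NP ..
  have "NN c0 = 0"
  proof (rule ccontr)
    assume "NN c0 \<noteq> 0"
    then have "NP c0 = 0" using NP_NN[of c0] by auto
    then have "T s0 \<le> 0" unfolding Ts0 by (simp add: divide_nonpos_pos DN_pos)
    then show False using Tpos[of s0] by simp
  qed
  then have Ts0': "T s0 = real P0 / real D0" unfolding Ts0 P0_def D0_def by simp
  have P0pos: "P0 > 0"
  proof (rule ccontr)
    assume "\<not> P0 > 0"
    then show False using Tpos[of s0] Ts0' by simp
  qed
  have D0pos: "D0 > 0" unfolding D0_def by (rule DN_pos)
  define T' where "T' s = (if take N s = s0 then T s / T s0 else 1)" for s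
  have child: "T' (s @ [x]) = 1" if "take N s \<noteq> s0" for s x
  proof (cases "take N (s @ [x]) = s0")
    case True
    then have "s @ [x] = s0" using take_child[OF s0 that] by blast
    then show ?thesis unfolding T'_def using True Tpos[of s0] by simp
  qed (simp add: T'_def)
  have sm: "supermartingale (const_fs (p, q)) T'"
    unfolding supermartingale_def const_fs_def
  proof
    fix s
    show "UExp (p, q) (\<lambda>x. T' (s @ [x]) - T' s) \<le> 0"
    proof (cases "take N s = s0")
      case True
      then have len: "N \<le> length s" using s0 by (metis length_take min.absorb_iff1 min.commute)
      then have tk: "take N (s @ [x]) = s0" for x using True by simp
      have eq: "(\<lambda>x. T' (s @ [x]) - T' s) = (\<lambda>x. (T (s @ [x]) - T s) / T s0)"
        unfolding T'_def using True tk by (simp add: diff_divide_distrib)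
      have "Exp p (\<lambda>x. T (s @ [x]) - T s) \<le> 0" "Exp q (\<lambda>x. T (s @ [x]) - T s) \<le> 0"
        using good[OF len] UExp_le0_iff[of "(p, q)"] pq by auto
      then show ?thesis unfolding eq UExp_le0_iff[of "(p, q)", simplified, OF pq] Exp_scale
        using Tpos[of s0] by (simp add: divide_nonpos_pos)
    next
      case False
      then have "(\<lambda>x. T' (s @ [x]) - T' s) = (\<lambda>x. 0)"
        using child[OF False] unfolding T'_def by simp
      then show ?thesis using UExp_zero[OF pq] by simp
    qed
  qed
  have T'pos: "T' s > 0" for s unfolding T'_def using Tpos by simp
  have T'rat: "T' s \<in> \<rat>" for s unfolding T'_def using Trat by simp
  have T'0: "T' [] = 1"
  proof (cases "take N [] = s0")
    case True
    then have "s0 = []" by simp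
    then show ?thesis unfolding T'_def using True Tpos[of "[]"] by simp
  qed (simp add: T'_def)
  define E0 where "E0 = enc_sit s0"
  define IE where "IE e = (if NN (g e) = 0 then 2 * NP (g e) * D0 else 2 * NN (g e) * D0 - 1)" for e
  define g' where "g' e = (if 2 ^ N \<le> e + 1 \<and> e mod 2 ^ N = E0 mod 2 ^ N
       then prod_encode (IE e, DN (g e) * P0 - 1) else prod_encode (2, 0))" for e
  have rec': "recursive_nat g'"
  proof -
    note gR = rf_app[OF g]
    have "rf 1 (\<lambda>xs. g' (xs ! 0))"
      unfolding g'_def IE_def
      by (intro rf_if rp_and rp_le rp_eq rf_mod rf_pow2 rf_const rf_proj rf_add rf_prod_encode
          rf_mult rf_minus rf_NP rf_NN rf_DN gR) auto
    then show ?thesis unfolding recursive_nat_rf .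
  qed
  have code: "T' s = dec_rat (g' (enc_sit s))" for s
  proof (cases "take N s = s0")
    case True
    then have cond: "2 ^ N \<le> enc_sit s + 1 \<and> enc_sit s mod 2 ^ N = E0 mod 2 ^ N"
      using prefix_code[OF s0, of s] E0_def by simp
    define c where "c = g (enc_sit s)"
    have Dp: "DN c * P0 > 0" using DN_pos P0pos by simp
    then have den: "Suc (DN c * P0 - 1) = DN c * P0" by simp
    have ie: "int_decode (IE (enc_sit s)) = (int (NP c) - int (NN c)) * int D0"
    proof (cases "NN c = 0")
      case True
      then show ?thesis unfolding IE_def c_def[symmetric]
        using int_decode_even[of "NP c * D0"] by (simp add: mult.assoc)
    next
      case False
      then have "NP c = 0" using NP_NN[of c] by auto
      moreover have "NN c * D0 > 0" using False D0pos by simp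
      ultimately show ?thesis unfolding IE_def c_def[symmetric]
        using False int_decode_odd[of "NN c * D0"] by (simp add: mult.assoc)
    qed
    have gs: "g' (enc_sit s) = prod_encode (IE (enc_sit s), DN c * P0 - 1)"
      unfolding g'_def c_def using cond by simp
    have "dec_rat (g' (enc_sit s)) = of_int (int_decode (IE (enc_sit s))) / of_nat (DN c * P0)"
      unfolding gs dec_rat_encode den ..
    also have "\<dots> = ((real (NP c) - real (NN c)) / real (DN c)) / (real P0 / real D0)"
      unfolding ie using DN_pos[of c] P0pos D0pos by (simp add: field_simps)
    also have "\<dots> = T s / T s0" by (simp only: Ts0') (simp only: Tg c_def dec_rat_NP)
    finally show ?thesis unfolding T'_def using True by simp
  next
    case False
    then have cond: "\<not> (2 ^ N \<le> enc_sit s + 1 \<and> enc_sit s mod 2 ^ N = E0 mod 2 ^ N)"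
      using prefix_code[OF s0, of s] E0_def by simp
    have gs: "g' (enc_sit s) = prod_encode (2, 0)" unfolding g'_def using cond by (rule if_not_P)
    have i2: "int_decode 2 = 1" using int_decode_even[of 1] by simp
    have "dec_rat (g' (enc_sit s)) = 1" unfolding gs dec_rat_encode i2 by simp
    then show ?thesis unfolding T'_def using False by simp
  qed
  have "T' \<in> rec_tests (const_fs (p, q))"
    unfolding rec_tests_def test_supermartingale_def recursive_rat_sit_def
    using sm T'pos T'rat T'0 rec' code less_imp_le by blast
  moreover have "\<forall>s. take N s = s0 \<longrightarrow> T' s = T s / T s0" unfolding T'_def by simp
  ultimately show ?thesis by blast
qed


lemma tests_incl:
  assumes "p \<le> q"
  shows "rec_tests (const_fs (p, q)) \<subseteq> rec_tests (phi_sw w p q)"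
proof
  fix T assume T: "T \<in> rec_tests (const_fs (p, q))"
  have "UExp (phi_sw w p q s) (\<lambda>x. T (s @ [x]) - T s) \<le> 0" for s
  proof -
    have "UExp (p, q) (\<lambda>x. T (s @ [x]) - T s) \<le> 0"
      using T unfolding rec_tests_def test_supermartingale_def supermartingale_def const_fs_def
      by blast
    then have "Exp p (\<lambda>x. T (s @ [x]) - T s) \<le> 0" "Exp q (\<lambda>x. T (s @ [x]) - T s) \<le> 0"
      using UExp_le0_iff[of "(p, q)"] assms by auto
    then show ?thesis unfolding phi_sw_def by (simp add: UExp_single)
  qed
  then show "T \<in> rec_tests (phi_sw w p q)"
    using T unfolding rec_tests_def test_supermartingale_def supermartingale_def by blast
qed

lemma prefix_take: "N \<le> n \<Longrightarrow> take N (prefix \<omega> n) = prefix \<omega> N"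
  unfolding prefix_def by (simp add: take_map min_def)

lemma growth_scale:
  assumes tau: "real_growth_function \<tau>" and K: "K > (0::nat)"
  shows "real_growth_function (\<lambda>n. \<tau> n / real K)"
proof -
  obtain g where g: "recursive_nat g"
    and ap: "\<And>d m. \<bar>\<tau> d - dec_rat (g (prod_encode (d, m)))\<bar> < 1 / 2 ^ m"
    using tau unfolding real_growth_function_def computable_real_nat_def by blast
  define g' where "g' x = prod_encode (fst (prod_decode (g x)), Suc (snd (prod_decode (g x))) * K - 1)" for x
  have rec: "recursive_nat g'"
  proof -
    note gR = rf_app[OF g]
    have "rf 1 (\<lambda>xs. g' (xs ! 0))"
      unfolding g'_def
      by (intro rf_prod_encode rf_fst_decode rf_snd_decode rf_minus rf_mult rf_succ rf_const gR rf_proj) auto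
    then show ?thesis unfolding recursive_nat_rf .
  qed
  have dec: "dec_rat (g' x) = dec_rat (g x) / real K" for x
  proof -
    obtain a b where ab: "prod_decode (g x) = (a, b)" by (cases "prod_decode (g x)")
    have "Suc (Suc b * K - 1) = Suc b * K" using K by simp
    then show ?thesis unfolding g'_def dec_rat_def ab using K by (simp add: algebra_simps)
  qed
  have comp: "computable_real_nat (\<lambda>n. \<tau> n / real K)"
    unfolding computable_real_nat_def
  proof (intro exI conjI allI)
    show "recursive_nat g'" by (rule rec)
    fix d m
    have "\<bar>\<tau> d / real K - dec_rat (g' (prod_encode (d, m)))\<bar>
        = \<bar>\<tau> d - dec_rat (g (prod_encode (d, m)))\<bar> / real K"
      unfolding dec using K by (simp add: diff_divide_distrib[symmetric])
    also have "\<dots> \<le> \<bar>\<tau> d - dec_rat (g (prod_encode (d, m)))\<bar>"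
      using divide_left_mono[of 1 "real K" "\<bar>\<tau> d - dec_rat (g (prod_encode (d, m)))\<bar>"] K by simp
    also have "\<dots> < 1 / 2 ^ m" by (rule ap)
    finally show "\<bar>\<tau> d / real K - dec_rat (g' (prod_encode (d, m)))\<bar> < 1 / 2 ^ m" .
  qed
  have mono: "mono (\<lambda>n. \<tau> n / real K)"
    using tau unfolding real_growth_function_def mono_def by (simp add: divide_right_mono)
  have nn: "\<forall>n. \<tau> n / real K \<ge> 0" using tau unfolding real_growth_function_def by simp
  have unb: "\<forall>B. \<exists>n. \<tau> n / real K > B"
  proof
    fix B
    obtain n where "\<tau> n > B * real K" using tau unfolding real_growth_function_def by blast
    then have "\<tau> n / real K > B" using K by (simp add: less_divide_eq)
    then show "\<exists>n. \<tau> n / real K > B" by blast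
  qed
  show ?thesis unfolding real_growth_function_def using comp mono nn unb by blast
qed


theorem corollary33:
  fixes p q :: real and I :: "real \<times> real" and w \<omega> :: "nat \<Rightarrow> bool"
  assumes "p \<in> \<rat>" and "q \<in> \<rat>" and "0 \<le> p" and "q \<le> 1" and "p < q"
    and "0 < fst I" and "fst I \<le> snd I" and "snd I < 1"
    and "wCH_random (const_fs I) w"
  shows "(C_random (phi_sw w p q) \<omega> \<longleftrightarrow> C_random (const_fs (p, q)) \<omega>)
       \<and> (S_random (phi_sw w p q) \<omega> \<longleftrightarrow> S_random (const_fs (p, q)) \<omega>)"
proof -
  have pq: "p \<le> q" using assms by simp
  note incl = tests_incl[OF pq, of w]
  have restartT: "\<exists>N T'. T' \<in> rec_tests (const_fs (p, q)) \<and> T (prefix \<omega> N) > 0 \<and>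
      (\<forall>n\<ge>N. T' (prefix \<omega> n) = T (prefix \<omega> n) / T (prefix \<omega> N))"
    if T: "T \<in> rec_tests (phi_sw w p q)" for T
  proof -
    obtain N where good: "\<forall>s. N \<le> length s \<longrightarrow> UExp (p, q) (\<lambda>x. T (s @ [x]) - T s) \<le> 0"
      using eventually_good[OF assms(1) assms(3) assms(2) assms(4) assms(5) assms(6) assms(8) assms(9) T]
      by blast
    have len: "length (prefix \<omega> N) = N" unfolding prefix_def by simp
    obtain T' where T': "T' \<in> rec_tests (const_fs (p, q))"
      and eq: "\<forall>s. take N s = prefix \<omega> N \<longrightarrow> T' s = T s / T (prefix \<omega> N)"
      using restart[OF T pq _ len] good by blast
    have "T (prefix \<omega> N) > 0" using T unfolding rec_tests_def by blast
    moreover have "\<forall>n\<ge>N. T' (prefix \<omega> n) = T (prefix \<omega> n) / T (prefix \<omega> N)"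
      using eq prefix_take by blast
    ultimately show ?thesis using T' by blast
  qed
  have nb: "(sequentially :: nat filter) \<noteq> bot" by simp
  have C: "C_random (phi_sw w p q) \<omega> \<longleftrightarrow> C_random (const_fs (p, q)) \<omega>"
  proof
    assume "C_random (phi_sw w p q) \<omega>"
    then show "C_random (const_fs (p, q)) \<omega>" using incl unfolding C_random_def by blast
  next
    assume hc: "C_random (const_fs (p, q)) \<omega>"
    show "C_random (phi_sw w p q) \<omega>"
      unfolding C_random_def
    proof
      assume "\<exists>T\<in>rec_tests (phi_sw w p q). limsup (\<lambda>n. ereal (T (prefix \<omega> n))) = \<infinity>"
      then obtain T where T: "T \<in> rec_tests (phi_sw w p q)"
        and lim: "limsup (\<lambda>n. ereal (T (prefix \<omega> n))) = \<infinity>" by blast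
      obtain N T' where T': "T' \<in> rec_tests (const_fs (p, q))" and c: "T (prefix \<omega> N) > 0"
        and eq: "\<forall>n\<ge>N. T' (prefix \<omega> n) = T (prefix \<omega> n) / T (prefix \<omega> N)"
        using restartT[OF T] by blast
      define c where "c = T (prefix \<omega> N)"
      have cpos: "c > 0" using c c_def by simp
      have ev: "eventually (\<lambda>n. ereal (T' (prefix \<omega> n)) = ereal (T (prefix \<omega> n)) * ereal (1 / c)) sequentially"
        unfolding eventually_sequentially using eq c_def by (intro exI[of _ N]) (auto simp: divide_inverse)
      have "limsup (\<lambda>n. ereal (T' (prefix \<omega> n))) = limsup (\<lambda>n. ereal (T (prefix \<omega> n)) * ereal (1 / c))"
        by (rule Limsup_eq[OF ev])
      also have "\<dots> = limsup (\<lambda>n. ereal (T (prefix \<omega> n))) * ereal (1 / c)"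
        by (rule Limsup_ereal_mult_right[OF nb]) (use cpos in simp)
      also have "\<dots> = \<infinity>" using lim cpos by simp
      finally show False using hc T' unfolding C_random_def by blast
    qed
  qed
  have S: "S_random (phi_sw w p q) \<omega> \<longleftrightarrow> S_random (const_fs (p, q)) \<omega>"
  proof
    assume "S_random (phi_sw w p q) \<omega>"
    then show "S_random (const_fs (p, q)) \<omega>" using incl unfolding S_random_def by blast
  next
    assume hs: "S_random (const_fs (p, q)) \<omega>"
    show "S_random (phi_sw w p q) \<omega>"
      unfolding S_random_def
    proof
      assume "\<exists>T\<in>rec_tests (phi_sw w p q). \<exists>\<tau>. real_growth_function \<tau> \<and>
          limsup (\<lambda>n. ereal (T (prefix \<omega> n) - \<tau> n)) \<ge> 0"
      then obtain T \<tau> where T: "T \<in> rec_tests (phi_sw w p q)" and tau: "real_growth_function \<tau>"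
        and lim: "limsup (\<lambda>n. ereal (T (prefix \<omega> n) - \<tau> n)) \<ge> 0" by blast
      obtain N T' where T': "T' \<in> rec_tests (const_fs (p, q))" and c: "T (prefix \<omega> N) > 0"
        and eq: "\<forall>n\<ge>N. T' (prefix \<omega> n) = T (prefix \<omega> n) / T (prefix \<omega> N)"
        using restartT[OF T] by blast
      define c where "c = T (prefix \<omega> N)"
      have cpos: "c > 0" using c c_def by simp
      define K where "K = nat \<lceil>c\<rceil> + 1"
      have K0: "K > 0" unfolding K_def by simp
      have cK: "c \<le> real K" unfolding K_def by linarith
      have Tpos: "T s > 0" for s using T unfolding rec_tests_def by blast
      have ev: "eventually (\<lambda>n. ereal (T (prefix \<omega> n) - \<tau> n) * ereal (1 / real K)
          \<le> ereal (T' (prefix \<omega> n) - \<tau> n / real K)) sequentially"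
        unfolding eventually_sequentially
      proof (intro exI[of _ N] allI impI)
        fix n assume n: "N \<le> n"
        have "T (prefix \<omega> n) / real K \<le> T (prefix \<omega> n) / c"
          using Tpos[of "prefix \<omega> n"] cpos cK by (intro divide_left_mono) auto
        then have "(T (prefix \<omega> n) - \<tau> n) * (1 / real K) \<le> T' (prefix \<omega> n) - \<tau> n / real K"
          using eq n c_def by (simp add: diff_divide_distrib)
        then show "ereal (T (prefix \<omega> n) - \<tau> n) * ereal (1 / real K)
          \<le> ereal (T' (prefix \<omega> n) - \<tau> n / real K)" by simp
      qed
      have "0 \<le> limsup (\<lambda>n. ereal (T (prefix \<omega> n) - \<tau> n)) * ereal (1 / real K)"
        using lim K0 by (intro ereal_0_le_mult) auto
      also have "\<dots> = limsup (\<lambda>n. ereal (T (prefix \<omega> n) - \<tau> n) * ereal (1 / real K))"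
        by (rule Limsup_ereal_mult_right[OF nb, symmetric]) simp
      also have "\<dots> \<le> limsup (\<lambda>n. ereal (T' (prefix \<omega> n) - \<tau> n / real K))"
        by (rule Limsup_mono[OF ev])
      finally have "0 \<le> limsup (\<lambda>n. ereal (T' (prefix \<omega> n) - \<tau> n / real K))" .
      moreover have "real_growth_function (\<lambda>n. \<tau> n / real K)" by (rule growth_scale[OF tau K0])
      ultimately show False using hs T' unfolding S_random_def by blast
    qed
  qed
  show ?thesis using C S by blast
qed

end
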